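(* Let $N\ge2$, $p>1$, and let $Q:\mathbb{R}^N\to\mathbb{R}$ be a nonnegative Hölder continuous function with $Q(0)>0$. Suppose $u\in C^2(\mathbb{R}^N\setminus\{0\})$ is a real-valued classical solution of $$-\Delta u-u=Q|u|^{p-1}u\quad\text{in }\mathbb{R}^N\setminus\{0\},\qquad \lim_{|x|\to0^+}u(x)=+\infty .$$ Then $u\in L^1_{loc}(\mathbb{R}^N)$ and $Q|u|^{p-1}u\in L^1_{loc}(\mathbb{R}^N)$. *)

theory Defs
  imports "HOL-Analysis.Analysis"
begin

definition partial_deriv :: "'n::finite \<Rightarrow> (real^'n \<Rightarrow> real) \<Rightarrow> real^'n \<Rightarrow> real" where
  "partial_deriv i f x = deriv (\<lambda>t. f (x + t *\<^sub>R axis i 1)) 0"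

definition has_partials_on :: "(real^'n::finite) set \<Rightarrow> (real^'n \<Rightarrow> real) \<Rightarrow> bool" where
  "has_partials_on S f \<longleftrightarrow>
     (\<forall>i. \<forall>x\<in>S. (\<lambda>t. f (x + t *\<^sub>R axis i 1)) differentiable (at 0))"

definition C2_on :: "(real^'n::finite) set \<Rightarrow> (real^'n \<Rightarrow> real) \<Rightarrow> bool" where
  "C2_on S f \<longleftrightarrow>
     continuous_on S f \<and> has_partials_on S f \<and>
     (\<forall>i. continuous_on S (partial_deriv i f) \<and> has_partials_on S (partial_deriv i f)) \<and>
     (\<forall>i j. continuous_on S (partial_deriv j (partial_deriv i f)))"

definition laplacian :: "(real^'n::finite \<Rightarrow> real) \<Rightarrow> real^'n \<Rightarrow> real" where
  "laplacian f x = (\<Sum>i\<in>UNIV. partial_deriv i (partial_deriv i f) x)"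

definition hoelder_continuous :: "('a::metric_space \<Rightarrow> real) \<Rightarrow> bool" where
  "hoelder_continuous Q \<longleftrightarrow>
     (\<exists>\<alpha> C. 0 < \<alpha> \<and> \<alpha> \<le> 1 \<and> (\<forall>x y. \<bar>Q x - Q y\<bar> \<le> C * dist x y powr \<alpha>))"

definition locally_L1 :: "(real^'n::finite \<Rightarrow> real) \<Rightarrow> bool" where
  "locally_L1 f \<longleftrightarrow> (\<forall>K. compact K \<longrightarrow> f absolutely_integrable_on K)"

end

theory Submission
  imports Defs
begin


lemma cc_abs:
  fixes f :: "'a::euclidean_space \<Rightarrow> real"
  assumes "compact S" "continuous_on S f"
  shows "f absolutely_integrable_on S"
proof -
  have m0: "(\<lambda>x. indicator S x *\<^sub>R f x) \<in> borel_measurable borel"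
    by (rule borel_measurable_continuous_on_indicator[OF borel_compact[OF assms(1)] assms(2)])
  then have m: "(\<lambda>x. indicator S x *\<^sub>R f x) \<in> borel_measurable lborel" by simp
  have "integrable lborel (\<lambda>x. indicator S x *\<^sub>R f x)"
    by (rule borel_integrable_compact[OF assms])
  then show ?thesis unfolding set_integrable_def using integrable_completion[OF m] by simp
qed

lemma cc_int:
  fixes f :: "'a::euclidean_space \<Rightarrow> real"
  assumes "compact S" "continuous_on S f"
  shows "f integrable_on S"
  using cc_abs[OF assms] set_lebesgue_integral_eq_integral(1) by blast

lemma deriv_glue_pt:
  fixes f g h :: "real \<Rightarrow> real"
  assumes "(f has_real_derivative d) (at x)" "(g has_real_derivative d) (at x)"
    "h x = f x" "f x = g x" "\<delta> > 0" "\<And>y. x - \<delta> < y \<Longrightarrow> y < x \<Longrightarrow> h y = f y"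
    "\<And>y. x < y \<Longrightarrow> y < x + \<delta> \<Longrightarrow> h y = g y"
  shows "(h has_real_derivative d) (at x)"
proof -
  have f: "((\<lambda>y. (f y - f x) / (y - x)) \<longlongrightarrow> d) (at x)" and g: "((\<lambda>y. (g y - g x) / (y - x)) \<longlongrightarrow> d) (at x)"
    using assms(1,2) by (simp_all add: has_field_derivative_iff)
  have L: "((\<lambda>y. (h y - h x) / (y - x)) \<longlongrightarrow> d) (at_left x)"
  proof (rule tendsto_cong[THEN iffD1, OF _ filterlim_mono[OF f order_refl at_le]])
    show "\<forall>\<^sub>F y in at_left x. (f y - f x) / (y - x) = (h y - h x) / (y - x)"
    proof -
      have "\<forall>\<^sub>F y in at_left x. y \<in> {x - \<delta><..<x}"
        using eventually_at_left_real[of "x - \<delta>" "x"] assms(5) by (auto elim: eventually_mono)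
      then show ?thesis by eventually_elim (use assms in auto)
    qed
  qed simp
  have R: "((\<lambda>y. (h y - h x) / (y - x)) \<longlongrightarrow> d) (at_right x)"
  proof (rule tendsto_cong[THEN iffD1, OF _ filterlim_mono[OF g order_refl at_le]])
    show "\<forall>\<^sub>F y in at_right x. (g y - g x) / (y - x) = (h y - h x) / (y - x)"
    proof -
      have "\<forall>\<^sub>F y in at_right x. y \<in> {x<..<x + \<delta>}"
        using eventually_at_right_real[of "x" "x + \<delta>"] assms(5) by (auto elim: eventually_mono)
      then show ?thesis by eventually_elim (use assms in auto)
    qed
  qed simp
  show ?thesis using L R by (simp add: has_field_derivative_iff filterlim_at_split)
qed

definition stp :: "real \<Rightarrow> real" where
  "stp s = 3 * (max 0 (min 1 s))^2 - 2 * (max 0 (min 1 s))^3"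
definition stp' :: "real \<Rightarrow> real" where
  "stp' s = 6 * (max 0 (min 1 s)) - 6 * (max 0 (min 1 s))^2"

lemma stp_cont: "continuous_on UNIV stp'"
  unfolding stp'_def by (intro continuous_intros)

lemma stp_deriv: "(stp has_real_derivative stp' s) (at s)"
proof -
  have P: "((\<lambda>s. 3 * s^2 - 2 * s^3) has_real_derivative (6 * s - 6 * s^2)) (at s)" for s :: real
    by (auto intro!: derivative_eq_intros simp: power2_eq_square)
  have open_case: "(stp has_real_derivative stp' s) (at s)" if "open T" "s \<in> T"
      "\<And>y. y \<in> T \<Longrightarrow> stp y = q y" "(q has_real_derivative stp' s) (at s)" for T q
    by (rule has_field_derivative_transform_within_open[OF that(4) that(1,2)]) (use that(3) in auto)
  consider "s < 0" | "s = 0" | "0 < s \<and> s < 1" | "s = 1" | "s > 1" by linarith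
  then show ?thesis
  proof cases
    case 1
    show ?thesis
      by (rule open_case[of "{..<0}" "\<lambda>_. 0"]) (use 1 in \<open>auto simp: stp_def stp'_def\<close>)
  next
    case 2
    show ?thesis
      by (rule deriv_glue_pt[where f="\<lambda>_. 0" and g="\<lambda>s. 3 * s^2 - 2 * s^3" and \<delta>=1])
        (use 2 P[of 0] in \<open>auto simp: stp_def stp'_def\<close>)
  next
    case 3
    show ?thesis
      by (rule open_case[of "{0<..<1}" "\<lambda>s. 3 * s^2 - 2 * s^3"])
        (use 3 P[of s] in \<open>auto simp: stp_def stp'_def\<close>)
  next
    case 4
    show ?thesis
      by (rule deriv_glue_pt[where g="\<lambda>_. 1" and f="\<lambda>s. 3 * s^2 - 2 * s^3" and \<delta>=1])
        (use 4 P[of 1] in \<open>auto simp: stp_def stp'_def\<close>)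
  next
    case 5
    show ?thesis
      by (rule open_case[of "{1<..}" "\<lambda>_. 1"]) (use 5 in \<open>auto simp: stp_def stp'_def\<close>)
  qed
qed

lemma stp_0: "s \<le> 0 \<Longrightarrow> stp s = 0" and stp_1: "s \<ge> 1 \<Longrightarrow> stp s = 1"
  and stp'_0: "s \<le> 0 \<Longrightarrow> stp' s = 0" and stp'_1: "s \<ge> 1 \<Longrightarrow> stp' s = 0"
  by (auto simp: stp_def stp'_def)

lemma stp'_nonneg: "stp' s \<ge> 0"
proof -
  have "0 \<le> max 0 (min 1 s)" "max 0 (min 1 s) \<le> 1" by auto
  then have "(max 0 (min 1 s))^2 \<le> max 0 (min 1 s)"
    by (simp add: power2_eq_square mult_left_le)
  then show ?thesis unfolding stp'_def by simp
qed

lemma stp_mono: "a \<le> b \<Longrightarrow> stp a \<le> stp b"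
  by (rule DERIV_nonneg_imp_nondecreasing[of a b stp]) (use stp_deriv stp'_nonneg in blast)+

lemma stp_bounds: "0 \<le> stp s" "stp s \<le> 1"
  using stp_mono[of 0 s] stp_mono[of s 1] stp_mono[of s 0] stp_mono[of 1 s] stp_0[of 0] stp_1[of 1]
proof -
  define m where "m = max 0 (min 1 s)"
  have m: "0 \<le> m" "m \<le> 1" by (auto simp: m_def)
  have e: "stp s = m^2 * (3 - 2*m)" "1 - stp s = (1-m)^2 * (1 + 2*m)"
    by (simp_all add: stp_def m_def[symmetric] algebra_simps power2_eq_square power3_eq_cube)
  have "0 \<le> m^2 * (3 - 2*m)" "0 \<le> (1-m)^2 * (1 + 2*m)" using m by simp_all
  then show "0 \<le> stp s" "stp s \<le> 1" using e by linarith+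
qed



lemma glue_cont:
  fixes g :: "real^'n \<Rightarrow> real"
  assumes "continuous_on (UNIV - {0}) g" "\<delta> > 0" "\<And>x. x \<noteq> 0 \<Longrightarrow> norm x < \<delta> \<Longrightarrow> g x = 0"
  shows "continuous_on UNIV (\<lambda>x. if x = 0 then 0 else g x)"
proof -
  have "continuous_on ((UNIV - {0}) \<union> ball 0 \<delta>) (\<lambda>x. if x = 0 then 0 else g x)"
  proof (rule continuous_on_open_Un)
    show "continuous_on (UNIV - {0}) (\<lambda>x. if x = 0 then 0 else g x)"
      using assms(1) by (rule continuous_on_eq) auto
    show "continuous_on (ball 0 \<delta>) (\<lambda>x. if x = 0 then 0 else g x)"
      by (rule continuous_on_eq[OF continuous_on_const[of _ 0]]) (use assms(3) in auto)
  qed auto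
  moreover have "(UNIV - {0}) \<union> ball 0 \<delta> = UNIV" using assms(2) by auto
  ultimately show ?thesis by metis
qed

lemma glue_deriv:
  fixes g d :: "real^'n \<Rightarrow> real"
  assumes "\<And>y. y \<noteq> 0 \<Longrightarrow> ((\<lambda>t. g (y + t *\<^sub>R axis i 1)) has_real_derivative d y) (at 0)"
    "\<delta> > 0" "\<And>x. x \<noteq> 0 \<Longrightarrow> norm x < \<delta> \<Longrightarrow> g x = 0"
  shows "((\<lambda>t. (\<lambda>x. if x = 0 then 0 else g x) (y + t *\<^sub>R axis i 1)) has_real_derivative
            (\<lambda>x. if x = 0 then 0 else d x) y) (at 0)"
proof (cases "y = 0")
  case True
  have ev: "\<forall>\<^sub>F t in nhds 0. (0::real) = (\<lambda>x. if x = 0 then 0 else g x) (y + t *\<^sub>R axis i 1)"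
  proof -
    have "\<forall>\<^sub>F t in nhds (0::real). t \<in> ball 0 \<delta>" using assms(2) by (intro eventually_nhds_in_open) auto
    then show ?thesis by eventually_elim (use True assms(3) in \<open>auto simp: dist_norm\<close>)
  qed
  have "((\<lambda>t. 0::real) has_real_derivative 0) (at 0)" by simp
  then show ?thesis using DERIV_cong_ev[OF refl ev refl] True by simp
next
  case False
  have ev: "\<forall>\<^sub>F t in nhds 0. g (y + t *\<^sub>R axis i 1) = (\<lambda>x. if x = 0 then 0 else g x) (y + t *\<^sub>R axis i 1)"
  proof -
    have "\<forall>\<^sub>F t in nhds (0::real). t \<in> ball 0 (norm y)" using False by (intro eventually_nhds_in_open) auto
    then show ?thesis
    proof eventually_elim
      case (elim t)
      have "norm y \<le> norm (y + t *\<^sub>R axis i 1) + norm (t *\<^sub>R axis i (1::real))"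
        using norm_triangle_ineq4[of "y + t *\<^sub>R axis i 1" "t *\<^sub>R axis i 1"] by (simp only: add_diff_cancel)
      then have "y + t *\<^sub>R axis i 1 \<noteq> 0" using elim by (auto simp: dist_norm)
      then show ?case by simp
    qed
  qed
  show ?thesis using DERIV_cong_ev[OF refl ev refl] assms(1)[OF False] False by simp
qed

lemma pd_line:
  assumes "has_partials_on S f" "y \<in> S"
  shows "((\<lambda>t. f (y + t *\<^sub>R axis i 1)) has_real_derivative partial_deriv i f y) (at 0)"
  using assms unfolding has_partials_on_def partial_deriv_def
  by (simp add: DERIV_deriv_iff_real_differentiable)

lemma line_shift:
  fixes g :: "real^'n \<Rightarrow> real"
  assumes "((\<lambda>t. g ((x + s *\<^sub>R e) + t *\<^sub>R e)) has_real_derivative d) (at 0)"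
  shows "((\<lambda>t. g (x + t *\<^sub>R e)) has_real_derivative d) (at s)"
proof -
  have "(\<lambda>t. g ((x + s *\<^sub>R e) + t *\<^sub>R e)) = (\<lambda>t. g (x + (t + s) *\<^sub>R e))"
    by (simp add: algebra_simps)
  with assms DERIV_shift[of "\<lambda>t. g (x + t *\<^sub>R e)" d 0 s] show ?thesis by simp
qed

lemma line_int_zero:
  fixes h D :: "real^'n \<Rightarrow> real"
  assumes hc: "continuous_on UNIV h" and Dc: "continuous_on UNIV D"
    and hd: "\<And>y. ((\<lambda>t. h (y + t *\<^sub>R axis i 1)) has_real_derivative D y) (at 0)"
    and hs: "\<And>x. R \<le> norm x \<Longrightarrow> h x = 0" and Ds: "\<And>x. R \<le> norm x \<Longrightarrow> D x = 0"
  shows "(D has_integral 0) (cball 0 (R+1))"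
proof -
  define e :: "real^'n" where "e = axis i 1"
  have ne: "norm e = 1" by (simp add: e_def)
  define K :: "(real^'n) set" where "K = cball 0 (R+1)"
  have cK: "compact K" by (simp add: K_def)
  have hK: "h integrable_on K" by (rule cc_int[OF cK continuous_on_subset[OF hc]]) auto
  have h0K: "h x = 0" if "x \<notin> K" for x using that hs[of x] by (auto simp: K_def)
  have hKU: "(h has_integral integral K h) UNIV"
    by (rule has_integral_on_superset[OF integrable_integral[OF hK]]) (use h0K in auto)
  have trans: "((\<lambda>x. h (x + c *\<^sub>R e)) has_integral integral K h) K" if c: "\<bar>c\<bar> \<le> 1" for c
  proof -
    define B :: "real^'n" where "B = (\<chi> j. R + 2)"
    define L where "L = cbox (-B) B"
    have inL: "x \<in> L" if "norm x < R + 2" for x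
    proof -
      have "-(R+2) \<le> x $ j \<and> x $ j \<le> R + 2" for j
        using component_le_norm_cart[of x j] that by (smt (verit))
      then show ?thesis unfolding L_def B_def mem_box_cart by simp
    qed
    have h0L: "h x = 0" if "x \<notin> L" for x using inL[of x] hs[of x] that by fastforce
    have hint: "h integrable_on L" unfolding L_def by (rule integrable_continuous[OF continuous_on_subset[OF hc]]) auto
    then obtain I where hI: "(h has_integral I) L" by blast
    have hIU: "(h has_integral I) UNIV" by (rule has_integral_on_superset[OF hI]) (use h0L in auto)
    then have II: "I = integral K h" using hKU has_integral_unique by blast
    have tI: "((\<lambda>x. h (x + c *\<^sub>R e)) has_integral I) ((\<lambda>x. x - c *\<^sub>R e) ` L)"
      using has_integral_affinity[OF hI[unfolded L_def], of 1 "c *\<^sub>R e"] unfolding L_def by simp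
    have tIU: "((\<lambda>x. h (x + c *\<^sub>R e)) has_integral I) UNIV"
    proof (rule has_integral_on_superset[OF tI])
      fix x assume "x \<notin> (\<lambda>x. x - c *\<^sub>R e) ` L"
      then have "x + c *\<^sub>R e \<notin> L" by (metis add_diff_cancel image_eqI)
      then show "h (x + c *\<^sub>R e) = 0" by (rule h0L)
    qed auto
    have tK: "(\<lambda>x. h (x + c *\<^sub>R e)) integrable_on K"
      by (rule cc_int[OF cK]) (intro continuous_on_compose2[OF hc] continuous_intros; auto)
    have t0: "h (x + c *\<^sub>R e) = 0" if "x \<notin> K" for x
    proof -
      have "norm x > R + 1" using that by (simp add: K_def)
      moreover have "norm x \<le> norm (x + c *\<^sub>R e) + \<bar>c\<bar>"
        using norm_triangle_ineq4[of "x + c *\<^sub>R e" "c *\<^sub>R e"] ne by simp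
      ultimately show ?thesis using hs c by fastforce
    qed
    have "((\<lambda>x. h (x + c *\<^sub>R e)) has_integral integral K (\<lambda>x. h (x + c *\<^sub>R e))) UNIV"
      by (rule has_integral_on_superset[OF integrable_integral[OF tK]]) (use t0 in auto)
    then have "integral K (\<lambda>x. h (x + c *\<^sub>R e)) = I" using tIU has_integral_unique by blast
    then show ?thesis using integrable_integral[OF tK] II by simp
  qed
  define c :: "nat \<Rightarrow> real" where "c = (\<lambda>n. inverse (real (Suc n)))"
  have c00: "c n > 0" for n by (simp add: c_def)
  have c01: "c n \<le> 1" for n by (simp add: c_def inverse_le_1_iff)
  have c0: "c n \<noteq> 0" "\<bar>c n\<bar> \<le> 1" "c n > 0" for n using c00[of n] c01[of n] by auto
  define q where "q n x = (h (x + c n *\<^sub>R e) - h x) / c n" for n x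
  have qint: "(q n has_integral 0) K" for n
  proof -
    have t: "((\<lambda>x. h (x + c n *\<^sub>R e)) has_integral integral K h) K" using trans c0(2) by blast
    have "((\<lambda>x. h (x + c n *\<^sub>R e) - h x) has_integral (integral K h - integral K h)) K"
      using has_integral_diff[OF t integrable_integral[OF hK]] by blast
    then have "((\<lambda>x. h (x + c n *\<^sub>R e) - h x) has_integral 0) K" by simp
    then have "((\<lambda>x. (h (x + c n *\<^sub>R e) - h x) / c n) has_integral (0 / c n)) K"
      by (rule has_integral_divide)
    then show ?thesis unfolding q_def by simp
  qed
  obtain M where M: "\<And>y. \<bar>D y\<bar> \<le> M"
  proof -
    obtain M where M: "M \<ge> 0" "\<And>x. x \<in> cball 0 R \<Longrightarrow> norm (D x) \<le> M"
      using continuous_on_compact_bound[OF compact_cball continuous_on_subset[OF Dc]] by blast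
    have "\<bar>D y\<bar> \<le> M" for y
    proof (cases "norm y \<le> R")
      case True then show ?thesis using M by auto
    next
      case False then show ?thesis using M Ds[of y] by auto
    qed
    then show ?thesis using that by blast
  qed
  have qb: "\<bar>q n x\<bar> \<le> M" for n x
  proof -
    have der: "((\<lambda>s. h (x + s *\<^sub>R e)) has_real_derivative D (x + s *\<^sub>R e)) (at s)" for s
      by (rule line_shift) (use hd[of "x + s *\<^sub>R e"] in \<open>simp add: e_def\<close>)
    obtain z where "z > 0" "z < c n" "h (x + c n *\<^sub>R e) - h (x + 0 *\<^sub>R e) = (c n - 0) * D (x + z *\<^sub>R e)"
      using MVT2[of 0 "c n" "\<lambda>s. h (x + s *\<^sub>R e)" "\<lambda>s. D (x + s *\<^sub>R e)"] der c0(3)[of n] by blast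
    then have "q n x = D (x + z *\<^sub>R e)" using c0(1)[of n] by (simp add: q_def)
    then show ?thesis using M by simp
  qed
  have qlim: "(\<lambda>n. q n x) \<longlonglongrightarrow> D x" for x
  proof -
    have "((\<lambda>t. (h (x + t *\<^sub>R e) - h (x + 0 *\<^sub>R e)) / (t - 0)) \<longlongrightarrow> D x) (at 0)"
      using hd[of x] unfolding has_field_derivative_iff e_def by simp
    then have L: "((\<lambda>t. (h (x + t *\<^sub>R e) - h x) / t) \<longlongrightarrow> D x) (at 0)" by simp
    have F: "filterlim c (at 0) sequentially"
      unfolding filterlim_at using c0 LIMSEQ_inverse_real_of_nat by (auto simp: c_def)
    show ?thesis using filterlim_compose[OF L F] by (simp add: q_def o_def)
  qed
  have qi: "q n integrable_on K" for n using qint by blast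
  have Mi: "(\<lambda>_. M) integrable_on K" by (rule cc_int[OF cK]) (rule continuous_on_const)
  have dc: "D integrable_on K" "(\<lambda>n. integral K (q n)) \<longlonglongrightarrow> integral K D"
    using dominated_convergence[where f=q and S=K and h="\<lambda>_. M" and g=D, OF qi Mi] qb qlim by auto
  have "(\<lambda>n. integral K (q n)) = (\<lambda>n. 0)" by (rule ext) (rule integral_unique[OF qint])
  then have "integral K D = 0" using dc(2) LIMSEQ_unique tendsto_const by metis
  then show ?thesis using integrable_integral[OF dc(1)] by (simp add: K_def)
qed



lemma stp_cont_intro [continuous_intros]:
  "continuous_on S f \<Longrightarrow> continuous_on S (\<lambda>x. stp (f x))"
  unfolding stp_def by (intro continuous_intros)

lemma stp'_cont_intro [continuous_intros]:
  "continuous_on S f \<Longrightarrow> continuous_on S (\<lambda>x. stp' (f x))"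
  unfolding stp'_def by (intro continuous_intros)

lemma loc_from_parts:
  fixes g :: "real^'n \<Rightarrow> real"
  assumes r: "r > 0" and gi: "g absolutely_integrable_on cball 0 r"
    and gc: "continuous_on (UNIV - {0}) g"
  shows "locally_L1 g"
  unfolding locally_L1_def
proof (intro allI impI)
  fix S :: "(real^'n) set" assume S: "compact S"
  obtain b where b: "\<And>x. x \<in> S \<Longrightarrow> norm x \<le> b"
    using compact_imp_bounded[OF S] unfolding bounded_iff by blast
  define Ko where "Ko = cball (0::real^'n) b - ball 0 r"
  have cKo: "compact Ko" unfolding Ko_def by (intro compact_diff) auto
  have "continuous_on Ko g" by (rule continuous_on_subset[OF gc]) (use r in \<open>auto simp: Ko_def\<close>)
  then have "g absolutely_integrable_on Ko" by (rule cc_abs[OF cKo])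
  then have "g absolutely_integrable_on (cball 0 r \<union> Ko)" using absolutely_integrable_Un gi by blast
  moreover have "S \<subseteq> cball 0 r \<union> Ko" using b by (auto simp: Ko_def)
  moreover have "S \<in> sets lebesgue" using S lmeasurable_compact fmeasurableD by blast
  ultimately show "g absolutely_integrable_on S" using set_integrable_subset by blast
qed



theorem lemma3p1:
  fixes Q u :: "real^'n \<Rightarrow> real" and p :: real
  assumes "CARD('n) \<ge> 2"
    and "p > 1"
    and "\<forall>x. Q x \<ge> 0"
    and "hoelder_continuous Q"
    and "Q 0 > 0"
    and "C2_on (UNIV - {0}) u"
    and "\<forall>x. x \<noteq> 0 \<longrightarrow> - laplacian u x - u x = Q x * \<bar>u x\<bar> powr (p - 1) * u x"
    and "filterlim u at_top (at 0)"
  shows "locally_L1 u \<and> locally_L1 (\<lambda>x. Q x * \<bar>u x\<bar> powr (p - 1) * u x)"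
proof -
  note C2 = assms(6)[unfolded C2_on_def]
  have uc: "continuous_on (UNIV - {0}) u" using C2 by blast
  have up: "has_partials_on (UNIV - {0}) u" using C2 by blast
  define Du where "Du i = partial_deriv i u" for i
  define DDu where "DDu i = partial_deriv i (Du i)" for i
  have Duc: "continuous_on (UNIV - {0}) (Du i)" for i using C2 by (simp add: Du_def)
  have Dup: "has_partials_on (UNIV - {0}) (Du i)" for i using C2 by (simp add: Du_def)
  have DDuc: "continuous_on (UNIV - {0}) (DDu i)" for i using C2 by (simp add: DDu_def Du_def)
  have uD: "((\<lambda>t. u (y + t *\<^sub>R axis i 1)) has_real_derivative Du i y) (at 0)" if "y \<noteq> 0" for i y
    unfolding Du_def by (rule pd_line[OF up]) (use that in auto)
  have DuD: "((\<lambda>t. Du i (y + t *\<^sub>R axis i 1)) has_real_derivative DDu i y) (at 0)" if "y \<noteq> 0" for i y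
    unfolding DDu_def by (rule pd_line[OF Dup]) (use that in auto)
  define f where "f x = - laplacian u x" for x
  have f_lap: "f x = - (\<Sum>i\<in>UNIV. DDu i x)" for x by (simp add: f_def laplacian_def DDu_def Du_def)
  have feq: "f x = u x + Q x * \<bar>u x\<bar> powr (p - 1) * u x" if "x \<noteq> 0" for x
    using assms(7)[rule_format, OF that] unfolding f_def by linarith
  have fu: "u x \<le> f x" if "x \<noteq> 0" "0 \<le> u x" for x
  proof -
    have "0 \<le> Q x * \<bar>u x\<bar> powr (p - 1) * u x" using assms(3) that by simp
    then show ?thesis using feq[OF that(1)] by linarith
  qed
  have fc: "continuous_on (UNIV - {0}) f" unfolding f_lap by (intro continuous_intros DDuc)
  have big: "\<exists>\<delta>>0. \<forall>x. x \<noteq> 0 \<and> norm x < \<delta> \<longrightarrow> b \<le> u x" for b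
  proof -
    have "\<forall>\<^sub>F x in at 0. b \<le> u x" using assms(8) by (simp add: filterlim_at_top)
    then show ?thesis by (simp add: eventually_at dist_norm)
  qed
  obtain \<rho> where \<rho>: "\<rho> > 0" "\<And>x. x \<noteq> 0 \<Longrightarrow> norm x < \<rho> \<Longrightarrow> 1 \<le> u x" using big[of 1] by blast
  define r where "r = \<rho> / 2"
  have r: "r > 0" using \<rho> by (simp add: r_def)
  define \<psi> where "\<psi> x = 1 - stp (x \<bullet> x / r^2 - 1)" for x :: "real^'n"
  define d\<psi> where "d\<psi> i x = - (stp' (x \<bullet> x / r^2 - 1) / r^2) * (2 * x $ i)" for i :: 'n and x :: "real^'n"
  have psiD: "((\<lambda>t. \<psi> (y + t *\<^sub>R axis i 1)) has_real_derivative d\<psi> i y) (at 0)" for i y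
  proof -
    have g: "((\<lambda>t. (y + t *\<^sub>R axis i 1) \<bullet> (y + t *\<^sub>R axis i 1)) has_real_derivative 2 * y $ i) (at 0)"
    proof -
      have eq: "(\<lambda>t. (y + t *\<^sub>R axis i 1) \<bullet> (y + t *\<^sub>R axis i 1)) = (\<lambda>t. y \<bullet> y + 2 * t * y $ i + t^2)"
        by (auto simp: fun_eq_iff inner_add_left inner_add_right inner_axis inner_axis' inner_axis_axis
            power2_eq_square algebra_simps)
      have "((\<lambda>t. y \<bullet> y + 2 * t * y $ i + t^2) has_real_derivative 2 * y $ i) (at 0)"
        by (auto intro!: derivative_eq_intros)
      then show ?thesis by (simp only: eq)
    qed
    have s: "((\<lambda>s. 1 - stp (s / r^2 - 1)) has_real_derivative 0 - stp' (s / r^2 - 1) * (1 / r^2)) (at s)" for s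
    proof -
      have "((\<lambda>s. s / r^2 - 1) has_real_derivative 1 / r^2) (at s)"
        by (rule DERIV_cong[OF DERIV_diff[OF DERIV_cdivide[OF DERIV_ident] DERIV_const]]) simp
      from DERIV_chain2[OF stp_deriv this]
      have "((\<lambda>s. stp (s / r^2 - 1)) has_real_derivative stp' (s / r^2 - 1) * (1 / r^2)) (at s)" .
      from DERIV_diff[OF DERIV_const this] show ?thesis .
    qed
    show ?thesis unfolding \<psi>_def
      by (rule DERIV_cong[OF DERIV_chain2[OF s g]]) (simp add: d\<psi>_def)
  qed
  have psic: "continuous_on S \<psi>" for S unfolding \<psi>_def using r by (intro continuous_intros) auto
  have dpsic: "continuous_on S (d\<psi> i)" for S i unfolding d\<psi>_def using r by (intro continuous_intros) auto
  have nsq: "x \<bullet> x = (norm x)^2" for x :: "real^'n" by (simp add: power2_norm_eq_inner)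
  have psi_b: "0 \<le> \<psi> x" "\<psi> x \<le> 1" for x unfolding \<psi>_def using stp_bounds by auto
  have psi_1: "\<psi> x = 1" if "norm x \<le> r" for x
  proof -
    have "(norm x)^2 \<le> r^2" using that by (simp add: power_mono)
    then have "x \<bullet> x / r^2 - 1 \<le> 0" using r by (simp add: nsq field_simps)
    then show ?thesis by (simp add: \<psi>_def stp_0)
  qed
  have dpsi_0: "d\<psi> i x = 0" if "norm x < r" for i x
  proof -
    have "(norm x)^2 \<le> r^2" using that by (simp add: power_mono)
    then have "x \<bullet> x / r^2 - 1 \<le> 0" using r by (simp add: nsq field_simps)
    then show ?thesis by (simp add: d\<psi>_def stp'_0)
  qed
  have far: "x \<bullet> x / r^2 - 1 \<ge> 1" if "\<rho> \<le> norm x" for x :: "real^'n"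
  proof -
    have "(2*r)^2 \<le> (norm x)^2" using that r by (intro power_mono) (auto simp: r_def)
    moreover have "0 \<le> r^2" by simp
    moreover have "(2*r)^2 = 4 * r^2" by (simp add: power_mult_distrib)
    ultimately have "2 * r^2 \<le> (norm x)^2" by linarith
    then have "2 * r^2 \<le> x \<bullet> x" by (metis nsq)
    then show ?thesis using r by (simp add: field_simps)
  qed
  have psi_0: "\<psi> x = 0" "d\<psi> i x = 0" if "\<rho> \<le> norm x" for i x
    using far[OF that] by (simp_all add: \<psi>_def d\<psi>_def stp_1 stp'_1)
  define G where "G = (\<lambda>(k::nat) s. 1 - stp (s - real k))"
  define G' where "G' = (\<lambda>(k::nat) s. - stp' (s - real k))"
  have GD: "(G k has_real_derivative G' k s) (at s)" for k s
  proof -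
    have "((\<lambda>s. s - real k) has_real_derivative 1) (at s)"
      by (rule DERIV_cong[OF DERIV_diff[OF DERIV_ident DERIV_const]]) simp
    from DERIV_chain2[OF stp_deriv this]
    have "((\<lambda>s. stp (s - real k)) has_real_derivative stp' (s - real k) * 1) (at s)" .
    from DERIV_diff[OF DERIV_const this] show ?thesis unfolding G_def G'_def by simp
  qed
  have G_b: "0 \<le> G k s" "G k s \<le> 1" for k s unfolding G_def using stp_bounds by auto
  have G'_np: "G' k s \<le> 0" for k s unfolding G'_def using stp'_nonneg by auto
  have G_1: "G k s = 1" if "s \<le> real k" for k s unfolding G_def using that by (simp add: stp_0)
  have G_0: "G k s = 0" "G' k s = 0" if "real k + 1 \<le> s" for k s
    unfolding G_def G'_def using that by (simp_all add: stp_1 stp'_1)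
  have G_mono: "G k s \<le> G (Suc k) s" for k s unfolding G_def using stp_mono[of "s - real (Suc k)" "s - real k"] by simp
  have Gc: "continuous_on S (\<lambda>x. G k (g x))" if "continuous_on S g" for S g k
    unfolding G_def using that by (intro continuous_intros)
  have G'c: "continuous_on S (\<lambda>x. G' k (g x))" if "continuous_on S g" for S g k
    unfolding G'_def using that by (intro continuous_intros)
  define gk where "gk = (\<lambda>(k::nat) x. if x = 0 then 0 else \<psi> x * G k (u x) * f x)"
  define wk where "wk = (\<lambda>(k::nat) x. if x = 0 then 0 else \<psi> x * G k (u x) * u x)"
  define Bf where "Bf = (\<lambda>x. if x = 0 then 0 else (\<Sum>i\<in>UNIV. \<bar>d\<psi> i x * Du i x\<bar>))"
  define K where "K = cball (0::real^'n) (\<rho> + 1)"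
  have cK: "compact K" by (simp add: K_def)
  have Bc: "continuous_on UNIV Bf" unfolding Bf_def
    by (rule glue_cont[OF _ r]) (auto intro!: continuous_intros dpsic Duc simp: dpsi_0)
  have gkc: "continuous_on UNIV (gk k)" and wkc: "continuous_on UNIV (wk k)" for k
  proof -
    obtain \<delta> where \<delta>: "\<delta> > 0" "\<And>x. x \<noteq> 0 \<Longrightarrow> norm x < \<delta> \<Longrightarrow> real k + 1 \<le> u x"
      using big[of "real k + 1"] by blast
    show "continuous_on UNIV (gk k)" unfolding gk_def
      by (rule glue_cont[OF _ \<delta>(1)]) (auto intro!: continuous_intros psic Gc uc fc simp: G_0 \<delta>(2))
    show "continuous_on UNIV (wk k)" unfolding wk_def
      by (rule glue_cont[OF _ \<delta>(1)]) (auto intro!: continuous_intros psic Gc uc simp: G_0 \<delta>(2))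
  qed
  have gk_nonneg: "0 \<le> gk k x" for k x
  proof (cases "x = 0 \<or> \<rho> \<le> norm x")
    case True then show ?thesis using psi_0 by (auto simp: gk_def)
  next
    case False
    then have "1 \<le> u x" using \<rho>(2) by auto
    then have "0 \<le> f x" using fu[of x] False by auto
    then show ?thesis using False psi_b G_b by (auto simp: gk_def intro!: mult_nonneg_nonneg)
  qed
  have bound: "integral K (gk k) \<le> integral K Bf" for k
  proof -
    obtain \<delta> where \<delta>: "\<delta> > 0" "\<And>x. x \<noteq> 0 \<Longrightarrow> norm x < \<delta> \<Longrightarrow> real k + 1 \<le> u x"
      using big[of "real k + 1"] by blast
    define hr where "hr i x = \<psi> x * G k (u x) * Du i x" for i x
    define Dr where "Dr i x = G k (u x) * (d\<psi> i x * Du i x) + (\<psi> x * G' k (u x)) * (Du i x)^2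
        + (\<psi> x * G k (u x)) * DDu i x" for i x
    have hrD: "((\<lambda>t. hr i (y + t *\<^sub>R axis i 1)) has_real_derivative Dr i y) (at 0)" if "y \<noteq> 0" for i y
    proof -
      have b: "((\<lambda>t. G k (u (y + t *\<^sub>R axis i 1))) has_real_derivative G' k (u y) * Du i y) (at 0)"
        using DERIV_chain2[OF GD uD[OF that]] by simp
      show ?thesis unfolding hr_def
        by (rule DERIV_cong[OF DERIV_mult[OF DERIV_mult[OF psiD b] DuD[OF that]]])
           (simp add: Dr_def algebra_simps power2_eq_square)
    qed
    have hrc: "continuous_on (UNIV - {0}) (hr i)" for i unfolding hr_def
      by (intro continuous_intros psic Gc uc Duc)
    have Drc: "continuous_on (UNIV - {0}) (Dr i)" for i unfolding Dr_def
      by (intro continuous_intros dpsic psic Gc G'c uc Duc DDuc)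
    have z1: "hr i x = 0" "Dr i x = 0" if "x \<noteq> 0" "norm x < \<delta>" for i x
      using G_0[OF \<delta>(2)[OF that]] by (simp_all add: hr_def Dr_def)
    have z2: "hr i x = 0" "Dr i x = 0" if "\<rho> \<le> norm x" for i x
      using psi_0[OF that] by (simp_all add: hr_def Dr_def)
    define hg where "hg i = (\<lambda>x. if x = 0 then 0 else hr i x)" for i
    define Dg where "Dg i = (\<lambda>x. if x = 0 then 0 else Dr i x)" for i
    have Dgi: "(Dg i has_integral 0) K" for i
      unfolding K_def
    proof (rule line_int_zero)
      show "continuous_on UNIV (hg i)" unfolding hg_def by (rule glue_cont[OF hrc \<delta>(1)]) (use z1 in auto)
      show "continuous_on UNIV (Dg i)" unfolding Dg_def by (rule glue_cont[OF Drc \<delta>(1)]) (use z1 in auto)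
      show "((\<lambda>t. hg i (y + t *\<^sub>R axis i 1)) has_real_derivative Dg i y) (at 0)" for y
        unfolding hg_def Dg_def by (rule glue_deriv[OF hrD \<delta>(1)]) (use z1 in auto)
      show "hg i x = 0" if "\<rho> \<le> norm x" for x using z2[OF that] by (simp add: hg_def)
      show "Dg i x = 0" if "\<rho> \<le> norm x" for x using z2[OF that] by (simp add: Dg_def)
    qed
    have sumi: "((\<lambda>x. \<Sum>i\<in>UNIV. Dg i x) has_integral 0) K"
      using has_integral_sum[of UNIV Dg "\<lambda>_. 0" K] Dgi by simp
    have pw: "gk k x \<le> Bf x - (\<Sum>i\<in>UNIV. Dg i x)" for x
    proof (cases "x = 0")
      case True then show ?thesis by (simp add: gk_def Bf_def Dg_def)
    next
      case False
      define a where "a i = d\<psi> i x * Du i x" for i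
      have sD: "(\<Sum>i\<in>UNIV. Dr i x) = G k (u x) * (\<Sum>i\<in>UNIV. a i)
          + (\<psi> x * G' k (u x)) * (\<Sum>i\<in>UNIV. (Du i x)^2) + (\<psi> x * G k (u x)) * (\<Sum>i\<in>UNIV. DDu i x)"
        by (simp add: Dr_def a_def sum.distrib sum_distrib_left)
      have g: "gk k x = - ((\<psi> x * G k (u x)) * (\<Sum>i\<in>UNIV. DDu i x))" using False by (simp add: gk_def f_lap)
      have A1: "G k (u x) * (\<Sum>i\<in>UNIV. a i) \<le> (\<Sum>i\<in>UNIV. \<bar>a i\<bar>)"
      proof -
        have "G k (u x) * (\<Sum>i\<in>UNIV. a i) \<le> G k (u x) * \<bar>\<Sum>i\<in>UNIV. a i\<bar>"
          by (rule mult_left_mono) (use G_b in auto)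
        also have "\<dots> \<le> \<bar>\<Sum>i\<in>UNIV. a i\<bar>" by (rule mult_left_le_one_le) (use G_b in auto)
        also have "\<dots> \<le> (\<Sum>i\<in>UNIV. \<bar>a i\<bar>)" by (rule sum_abs)
        finally show ?thesis .
      qed
      have A2: "(\<psi> x * G' k (u x)) * (\<Sum>i\<in>UNIV. (Du i x)^2) \<le> 0"
        by (rule mult_nonpos_nonneg[OF mult_nonneg_nonpos[OF psi_b(1) G'_np]]) (simp add: sum_nonneg)
      have e: "Bf x = (\<Sum>i\<in>UNIV. \<bar>a i\<bar>)" "(\<Sum>i\<in>UNIV. Dg i x) = (\<Sum>i\<in>UNIV. Dr i x)"
        by (simp_all add: Bf_def Dg_def a_def False)
      show ?thesis using sD g A1 A2 e by linarith
    qed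
    have gki: "gk k integrable_on K" using cc_int[OF cK continuous_on_subset[OF gkc]] by blast
    have Bi: "Bf integrable_on K" using cc_int[OF cK continuous_on_subset[OF Bc]] by blast
    have "integral K (gk k) \<le> integral K Bf - 0"
      by (rule has_integral_le[OF integrable_integral[OF gki] has_integral_diff[OF integrable_integral[OF Bi] sumi]])
        (use pw in auto)
    then show ?thesis by simp
  qed
  define Ki where "Ki = cball (0::real^'n) r"
  have KiK: "Ki \<subseteq> K" using r by (auto simp: Ki_def K_def r_def)
  have cKi: "compact Ki" by (simp add: Ki_def)
  have in_Ki: "\<psi> x = 1" "1 \<le> u x" if "x \<in> Ki" "x \<noteq> 0" for x
  proof -
    have "norm x \<le> r" using that by (simp add: Ki_def)
    then show "\<psi> x = 1" by (rule psi_1)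
    have "norm x < \<rho>" using \<open>norm x \<le> r\<close> r by (simp add: r_def)
    then show "1 \<le> u x" using \<rho>(2) that by blast
  qed
  define F where "F x = (if x = 0 then 0 else f x)" for x
  define U where "U x = (if x = 0 then 0 else u x)" for x
  have gkiS: "gk k integrable_on S" if "compact S" for k S using cc_int[OF that continuous_on_subset[OF gkc]] by blast
  have wkiS: "wk k integrable_on S" if "compact S" for k S using cc_int[OF that continuous_on_subset[OF wkc]] by blast
  have intle: "integral Ki (gk k) \<le> integral K Bf" for k
  proof -
    have "integral Ki (gk k) \<le> integral K (gk k)"
      using integral_subset_le[OF KiK gkiS[OF cKi] gkiS[OF cK]] gk_nonneg by blast
    then show ?thesis using bound[of k] by linarith
  qed
  have intge: "0 \<le> integral Ki (gk k)" for k using integral_nonneg[OF gkiS[OF cKi]] gk_nonneg by blast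
  have wg: "wk k x \<le> gk k x" "0 \<le> wk k x" if "x \<in> Ki" for k x
  proof -
    have "wk k x \<le> gk k x \<and> 0 \<le> wk k x"
    proof (cases "x = 0")
      case False
      then have "\<psi> x = 1" "1 \<le> u x" using in_Ki that by auto
      then have "u x \<le> f x" using fu[OF False] by auto
      then show ?thesis using False \<open>\<psi> x = 1\<close> \<open>1 \<le> u x\<close> G_b[of k "u x"]
        by (auto simp: gk_def wk_def intro: mult_left_mono)
    qed (simp add: gk_def wk_def)
    then show "wk k x \<le> gk k x" "0 \<le> wk k x" by auto
  qed
  have intle2: "integral Ki (wk k) \<le> integral K Bf" for k
  proof -
    have "integral Ki (wk k) \<le> integral Ki (gk k)"
      by (rule integral_le[OF wkiS[OF cKi] gkiS[OF cKi]]) (use wg in auto)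
    then show ?thesis using intle[of k] by linarith
  qed
  have intge2: "0 \<le> integral Ki (wk k)" for k using integral_nonneg[OF wkiS[OF cKi]] wg by blast
  have evk: "\<forall>\<^sub>F k in sequentially. G k (u x) = 1" for x
  proof -
    obtain N :: nat where N: "u x \<le> real N" using real_arch_simple by blast
    have "G n (u x) = 1" if "N \<le> n" for n
    proof -
      have "real N \<le> real n" using that by simp
      then show ?thesis using N by (intro G_1) linarith
    qed
    then show ?thesis unfolding eventually_sequentially by blast
  qed
  have Fi: "F integrable_on Ki"
  proof -
    have "F integrable_on Ki \<and> ((\<lambda>k. integral Ki (gk k)) \<longlonglongrightarrow> integral Ki F)"
    proof (rule monotone_convergence_increasing)
      show "gk k integrable_on Ki" for k by (rule gkiS[OF cKi])
      show "gk k x \<le> gk (Suc k) x" if "x \<in> Ki" for k x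
      proof (cases "x = 0")
        case False
        then have "\<psi> x = 1" "1 \<le> u x" using in_Ki that by auto
        then have "0 \<le> f x" using fu[OF False] by auto
        then show ?thesis using False \<open>\<psi> x = 1\<close> G_mono[of k "u x"] by (simp add: gk_def mult_right_mono)
      qed (simp add: gk_def)
      show "(\<lambda>k. gk k x) \<longlonglongrightarrow> F x" if "x \<in> Ki" for x
      proof (cases "x = 0")
        case False
        then have "\<psi> x = 1" using in_Ki that by auto
        have "\<forall>\<^sub>F k in sequentially. gk k x = F x"
          using evk[of x] by eventually_elim (use False \<open>\<psi> x = 1\<close> in \<open>simp add: gk_def F_def\<close>)
        then show ?thesis by (rule tendsto_eventually)
      qed (simp add: gk_def F_def)
      show "bounded (range (\<lambda>k. integral Ki (gk k)))"
        unfolding bounded_iff using intle intge by (intro exI[of _ "integral K Bf"]) auto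
    qed
    then show ?thesis by blast
  qed
  have Ui: "U integrable_on Ki"
  proof -
    have "U integrable_on Ki \<and> ((\<lambda>k. integral Ki (wk k)) \<longlonglongrightarrow> integral Ki U)"
    proof (rule monotone_convergence_increasing)
      show "wk k integrable_on Ki" for k by (rule wkiS[OF cKi])
      show "wk k x \<le> wk (Suc k) x" if "x \<in> Ki" for k x
      proof (cases "x = 0")
        case False
        then have "\<psi> x = 1" "1 \<le> u x" using in_Ki that by auto
        then show ?thesis using False G_mono[of k "u x"] by (simp add: wk_def mult_right_mono)
      qed (simp add: wk_def)
      show "(\<lambda>k. wk k x) \<longlonglongrightarrow> U x" if "x \<in> Ki" for x
      proof (cases "x = 0")
        case False
        then have "\<psi> x = 1" using in_Ki that by auto
        have "\<forall>\<^sub>F k in sequentially. wk k x = U x"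
          using evk[of x] by eventually_elim (use False \<open>\<psi> x = 1\<close> in \<open>simp add: wk_def U_def\<close>)
        then show ?thesis by (rule tendsto_eventually)
      qed (simp add: wk_def U_def)
      show "bounded (range (\<lambda>k. integral Ki (wk k)))"
        unfolding bounded_iff using intle2 intge2 by (intro exI[of _ "integral K Bf"]) auto
    qed
    then show ?thesis by blast
  qed
  have u_abs: "u absolutely_integrable_on Ki"
  proof -
    have "U absolutely_integrable_on Ki"
      by (rule nonnegative_absolutely_integrable_1[OF Ui]) (use in_Ki(2) in \<open>force simp: U_def\<close>)
    then show ?thesis by (rule absolutely_integrable_spike[OF _ negligible_sing]) (auto simp: U_def)
  qed
  have V_abs: "(\<lambda>x. Q x * \<bar>u x\<bar> powr (p - 1) * u x) absolutely_integrable_on Ki"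
  proof -
    have "(\<lambda>x. F x - U x) absolutely_integrable_on Ki"
    proof (rule nonnegative_absolutely_integrable_1[OF integrable_diff[OF Fi Ui]])
      fix x assume x: "x \<in> Ki"
      show "0 \<le> F x - U x"
      proof (cases "x = 0")
        case False
        then show ?thesis using fu[OF False] in_Ki[OF x False] by (simp add: F_def U_def)
      qed (simp add: F_def U_def)
    qed
    then show ?thesis by (rule absolutely_integrable_spike[OF _ negligible_sing]) (auto simp: U_def F_def feq)
  qed
  have Vc: "continuous_on (UNIV - {0}) (\<lambda>x. Q x * \<bar>u x\<bar> powr (p - 1) * u x)"
  proof (rule continuous_on_eq)
    show "continuous_on (UNIV - {0}) (\<lambda>x. f x - u x)" by (intro continuous_intros fc uc)
  qed (simp add: feq)
  show ?thesis
    using loc_from_parts[OF r u_abs[unfolded Ki_def] uc] loc_from_parts[OF r V_abs[unfolded Ki_def] Vc]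
    by blast
qed

end
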